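(* Let $(E,\langle\cdot,\cdot\rangle,\circ,a_E)$ be a metric algebroid over $M$. Then there exists a metric connection $\nabla$ on the anchored metric bundle $(E,\langle\cdot,\cdot\rangle,a_E)$ such that for all $e_1,e_2,e_3\in\Gamma(E)$, $$\langle e_1\circ e_2,e_3\rangle=\langle\nabla_{e_1}e_2,e_3\rangle-\langle\nabla_{e_2}e_1,e_3\rangle+\langle\nabla_{e_3}e_1,e_2\rangle.$$
   Context: $E\to M$ is a vector bundle with a pseudo-metric $\langle\cdot,\cdot\rangle$ (nondegenerate symmetric bilinear form) and a bundle map $a_E:E\to TM$. A metric connection is an $\mathbb{R}$-bilinear $\nabla:\Gamma(E)\times\Gamma(E)\to\Gamma(E)$ with $\nabla_{fe_1}e_2=f\nabla_{e_1}e_2$, $\nabla_{e_1}(fe_2)=a_E(e_1)(f)e_2+f\nabla_{e_1}e_2$ and $a_E(e_1)\langle e_2,e_3\rangle=\langle\nabla_{e_1}e_2,e_3\rangle+\langle e_2,\nabla_{e_1}e_3\rangle$. A metric algebroid $(E,\langle\cdot,\cdot\rangle,\circ,a_E)$ is such a bundle with an $\mathbb{R}$-bilinear bracket $\circ$ on $\Gamma(E)$ satisfying $a_E(e)\langle h_1,h_2\rangle=\langle e\circ h_1,h_2\rangle+\langle h_1,e\circ h_2\rangle$ and $e\circ e=\tfrac12\mathcal{D}\langle e,e\rangle$, where $\mathcal{D}:C^\infty(M)\to\Gamma(E)$ is defined by $\langle\mathcal{D}(f),e\rangle=a_E(e)(f)$. *)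

theory Defs
  imports Main "HOL.Real_Vector_Spaces"
begin

text \<open>Algebraic (Serre--Swan) model of a smooth vector bundle E over M:
  the ring 'r plays the role of C^\<infinity>(M) (a commutative real algebra),
  the type 'e plays the role of the space of sections Gamma(E), which is
  a finitely generated projective 'r-module with scalar action smult.\<close>

definition section_module :: "('r::{comm_ring_1,real_algebra_1} \<Rightarrow> 'e::ab_group_add \<Rightarrow> 'e) \<Rightarrow> bool" where
  "section_module smult \<longleftrightarrow>
     (\<forall>r x y. smult r (x + y) = smult r x + smult r y) \<and>
     (\<forall>r s x. smult (r + s) x = smult r x + smult s x) \<and>
     (\<forall>r s x. smult (r * s) x = smult r (smult s x)) \<and>
     (\<forall>x. smult 1 x = x)"

definition r_linear :: "('r::{comm_ring_1,real_algebra_1} \<Rightarrow> 'e::ab_group_add \<Rightarrow> 'e) \<Rightarrow> ('e \<Rightarrow> 'r) \<Rightarrow> bool" where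
  "r_linear smult \<phi> \<longleftrightarrow> (\<forall>x y. \<phi> (x + y) = \<phi> x + \<phi> y) \<and> (\<forall>r x. \<phi> (smult r x) = r * \<phi> x)"

text \<open>Finitely generated projective module (dual basis characterisation);
  by Serre--Swan this characterises section modules of vector bundles.\<close>
definition fg_projective :: "('r::{comm_ring_1,real_algebra_1} \<Rightarrow> 'e::ab_group_add \<Rightarrow> 'e) \<Rightarrow> bool" where
  "fg_projective smult \<longleftrightarrow>
     (\<exists>(n::nat) (s::nat \<Rightarrow> 'e) (\<phi>::nat \<Rightarrow> 'e \<Rightarrow> 'r).
        (\<forall>i<n. r_linear smult (\<phi> i)) \<and> (\<forall>e. e = (\<Sum>i<n. smult (\<phi> i e) (s i))))"

text \<open>Vector fields = derivations of C^\<infinity>(M) (real-linear, Leibniz).\<close>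
definition is_derivation :: "('r::{comm_ring_1,real_algebra_1} \<Rightarrow> 'r) \<Rightarrow> bool" where
  "is_derivation X \<longleftrightarrow>
     (\<forall>f g. X (f + g) = X f + X g) \<and>
     (\<forall>c f. X (of_real c * f) = of_real c * X f) \<and>
     (\<forall>f g. X (f * g) = X f * g + f * X g)"

text \<open>Anchored bundle with pseudo-metric: symmetric, C^\<infinity>-bilinear,
  nondegenerate pairing (musical map Gamma(E) -> Gamma(E*) bijective),
  and a bundle map a_E : E -> TM.\<close>
definition anchored_metric_bundle ::
  "('r::{comm_ring_1,real_algebra_1} \<Rightarrow> 'e::ab_group_add \<Rightarrow> 'e) \<Rightarrow> ('e \<Rightarrow> 'e \<Rightarrow> 'r) \<Rightarrow> ('e \<Rightarrow> 'r \<Rightarrow> 'r) \<Rightarrow> bool" where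
  "anchored_metric_bundle smult pair anchor \<longleftrightarrow>
     section_module smult \<and> fg_projective smult \<and>
     (\<forall>x y. pair x y = pair y x) \<and>
     (\<forall>x. r_linear smult (pair x)) \<and>
     (\<forall>\<phi>. r_linear smult \<phi> \<longrightarrow> (\<exists>!x. \<forall>y. pair x y = \<phi> y)) \<and>
     (\<forall>e1 e2. anchor (e1 + e2) = (\<lambda>f. anchor e1 f + anchor e2 f)) \<and>
     (\<forall>g e. anchor (smult g e) = (\<lambda>f. g * anchor e f)) \<and>
     (\<forall>e. is_derivation (anchor e))"

definition Dop :: "('e \<Rightarrow> 'e \<Rightarrow> 'r) \<Rightarrow> ('e \<Rightarrow> 'r \<Rightarrow> 'r) \<Rightarrow> 'r \<Rightarrow> 'e" where
  "Dop pair anchor f = (THE d. \<forall>e. pair d e = anchor e f)"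

definition metric_connection ::
  "('r::{comm_ring_1,real_algebra_1} \<Rightarrow> 'e::ab_group_add \<Rightarrow> 'e) \<Rightarrow> ('e \<Rightarrow> 'e \<Rightarrow> 'r) \<Rightarrow> ('e \<Rightarrow> 'r \<Rightarrow> 'r)
     \<Rightarrow> ('e \<Rightarrow> 'e \<Rightarrow> 'e) \<Rightarrow> bool" where
  "metric_connection smult pair anchor nabla \<longleftrightarrow>
     (\<forall>e1 e1' e2. nabla (e1 + e1') e2 = nabla e1 e2 + nabla e1' e2) \<and>
     (\<forall>e1 e2 e2'. nabla e1 (e2 + e2') = nabla e1 e2 + nabla e1 e2') \<and>
     (\<forall>c e1 e2. nabla (smult (of_real c) e1) e2 = smult (of_real c) (nabla e1 e2)) \<and>
     (\<forall>c e1 e2. nabla e1 (smult (of_real c) e2) = smult (of_real c) (nabla e1 e2)) \<and>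
     (\<forall>f e1 e2. nabla (smult f e1) e2 = smult f (nabla e1 e2)) \<and>
     (\<forall>f e1 e2. nabla e1 (smult f e2) = smult (anchor e1 f) e2 + smult f (nabla e1 e2)) \<and>
     (\<forall>e1 e2 e3. anchor e1 (pair e2 e3) = pair (nabla e1 e2) e3 + pair e2 (nabla e1 e3))"

definition metric_algebroid ::
  "('r::{comm_ring_1,real_algebra_1} \<Rightarrow> 'e::ab_group_add \<Rightarrow> 'e) \<Rightarrow> ('e \<Rightarrow> 'e \<Rightarrow> 'r)
     \<Rightarrow> ('e \<Rightarrow> 'e \<Rightarrow> 'e) \<Rightarrow> ('e \<Rightarrow> 'r \<Rightarrow> 'r) \<Rightarrow> bool" where
  "metric_algebroid smult pair circ anchor \<longleftrightarrow>
     anchored_metric_bundle smult pair anchor \<and>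
     (\<forall>e1 e1' e2. circ (e1 + e1') e2 = circ e1 e2 + circ e1' e2) \<and>
     (\<forall>e1 e2 e2'. circ e1 (e2 + e2') = circ e1 e2 + circ e1 e2') \<and>
     (\<forall>c e1 e2. circ (smult (of_real c) e1) e2 = smult (of_real c) (circ e1 e2)) \<and>
     (\<forall>c e1 e2. circ e1 (smult (of_real c) e2) = smult (of_real c) (circ e1 e2)) \<and>
     (\<forall>e h1 h2. anchor e (pair h1 h2) = pair (circ e h1) h2 + pair h1 (circ e h2)) \<and>
     (\<forall>e. circ e e = smult (of_real (1/2)) (Dop pair anchor (pair e e)))"

end

theory Submission
  imports Defs
begin

locale amb =
  fixes smult :: "'r::{comm_ring_1,real_algebra_1} \<Rightarrow> 'e::ab_group_add \<Rightarrow> 'e"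
    and pair :: "'e \<Rightarrow> 'e \<Rightarrow> 'r"
    and anchor :: "'e \<Rightarrow> 'r \<Rightarrow> 'r"
  assumes amb: "anchored_metric_bundle smult pair anchor"
begin

lemma sm: "section_module smult"
  using amb unfolding anchored_metric_bundle_def by simp

lemma sm_add_r: "smult r (x + y) = smult r x + smult r y"
  using sm unfolding section_module_def by blast
lemma sm_add_l: "smult (r + s) x = smult r x + smult s x"
  using sm unfolding section_module_def by blast
lemma sm_mult: "smult (r * s) x = smult r (smult s x)"
  using sm unfolding section_module_def by blast
lemma sm_one: "smult 1 x = x"
  using sm unfolding section_module_def by blast

lemma sm_zero_r: "smult r 0 = 0"
proof -
  have "smult r 0 + smult r 0 = smult r 0 + 0" using sm_add_r[of r 0 0] by simp
  then show ?thesis by simp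
qed
lemma sm_zero_l: "smult 0 x = 0"
proof -
  have "smult 0 x + smult 0 x = smult 0 x + 0" using sm_add_l[of 0 0 x] by simp
  then show ?thesis by simp
qed
lemma sm_minus_r: "smult r (- x) = - smult r x"
  by (metis add.right_inverse sm_add_r sm_zero_r eq_neg_iff_add_eq_0)
lemma sm_minus_l: "smult (- r) x = - smult r x"
  by (metis add.right_inverse sm_add_l sm_zero_l eq_neg_iff_add_eq_0)
lemma sm_diff_r: "smult r (x - y) = smult r x - smult r y"
  by (metis diff_conv_add_uminus sm_add_r sm_minus_r)
lemma sm_diff_l: "smult (r - s) x = smult r x - smult s x"
  by (metis diff_conv_add_uminus sm_add_l sm_minus_l)
lemma sm_sum_r: "smult r (sum f A) = (\<Sum>i\<in>A. smult r (f i))"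
  by (induction A rule: infinite_finite_induct) (auto simp: sm_zero_r sm_add_r)
lemma sm_sum_l: "smult (sum g A) x = (\<Sum>i\<in>A. smult (g i) x)"
  by (induction A rule: infinite_finite_induct) (auto simp: sm_zero_l sm_add_l)

lemma pair_sym: "pair x y = pair y x"
  using amb unfolding anchored_metric_bundle_def by simp
lemma pair_lin: "r_linear smult (pair x)"
  using amb unfolding anchored_metric_bundle_def by simp
lemma pair_add2: "pair x (y + z) = pair x y + pair x z"
  using pair_lin unfolding r_linear_def by blast
lemma pair_sm2: "pair x (smult r y) = r * pair x y"
  using pair_lin unfolding r_linear_def by blast
lemma pair_add1: "pair (y + z) x = pair y x + pair z x"
  using pair_add2 pair_sym by metis
lemma pair_sm1: "pair (smult r y) x = r * pair y x"
  using pair_sm2 pair_sym by metis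
lemma pair_zero2: "pair x 0 = 0"
  using pair_add2[of x 0 0] by simp
lemma pair_zero1: "pair 0 x = 0"
  using pair_zero2 pair_sym by metis
lemma pair_minus2: "pair x (- y) = - pair x y"
  by (metis add.right_inverse pair_add2 pair_zero2 eq_neg_iff_add_eq_0)
lemma pair_minus1: "pair (- y) x = - pair y x"
  using pair_minus2 pair_sym by metis
lemma pair_diff2: "pair x (y - z) = pair x y - pair x z"
  by (metis diff_conv_add_uminus pair_add2 pair_minus2)
lemma pair_diff1: "pair (y - z) x = pair y x - pair z x"
  using pair_diff2 pair_sym by metis

lemmas psimps = pair_add1 pair_add2 pair_sm1 pair_sm2 pair_zero1 pair_zero2
  pair_minus1 pair_minus2 pair_diff1 pair_diff2

lemma nondeg: "r_linear smult \<phi> \<Longrightarrow> \<exists>!x. \<forall>y. pair x y = \<phi> y"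
  using amb unfolding anchored_metric_bundle_def by simp

definition rep :: "('e \<Rightarrow> 'r) \<Rightarrow> 'e" where
  "rep \<phi> = (THE x. \<forall>y. pair x y = \<phi> y)"

lemma pair_rep: "r_linear smult \<phi> \<Longrightarrow> pair (rep \<phi>) y = \<phi> y"
  unfolding rep_def using theI'[OF nondeg] by metis

lemma pair_ext: "(\<And>y. pair x y = pair z y) \<Longrightarrow> x = z"
  using nondeg[OF pair_lin[of z]] by blast

lemma r_linearI: "(\<And>x y. \<phi> (x + y) = \<phi> x + \<phi> y) \<Longrightarrow> (\<And>r x. \<phi> (smult r x) = r * \<phi> x)
  \<Longrightarrow> r_linear smult \<phi>"
  unfolding r_linear_def by blast

lemma anc_add1: "anchor (e1 + e2) f = anchor e1 f + anchor e2 f"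
  using amb unfolding anchored_metric_bundle_def by simp
lemma anc_sm1: "anchor (smult g e) f = g * anchor e f"
  using amb unfolding anchored_metric_bundle_def by simp
lemma anc_der: "is_derivation (anchor e)"
  using amb unfolding anchored_metric_bundle_def by simp
lemma anc_add2: "anchor e (f + g) = anchor e f + anchor e g"
  using anc_der unfolding is_derivation_def by blast
lemma anc_mult: "anchor e (f * g) = anchor e f * g + f * anchor e g"
  using anc_der unfolding is_derivation_def by blast
lemma anc_ofr: "anchor e (of_real c * f) = of_real c * anchor e f"
  using anc_der unfolding is_derivation_def by blast
lemma anc_one: "anchor e 1 = 0"
  using anc_mult[of e 1 1] by simp
lemma anc_of_real: "anchor e (of_real c) = 0"
  using anc_ofr[of e c 1] by (simp add: anc_one)
lemma anc_num: "anchor e (numeral k) = 0"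
  using anc_of_real[of e "numeral k"] by simp
lemma anc_zero2: "anchor e 0 = 0"
  using anc_add2[of e 0 0] by simp
lemma anc_minus2: "anchor e (- f) = - anchor e f"
  by (metis add.right_inverse anc_add2 anc_zero2 eq_neg_iff_add_eq_0)
lemma anc_diff2: "anchor e (f - g) = anchor e f - anchor e g"
  by (metis diff_conv_add_uminus anc_add2 anc_minus2)
lemma anc_zero1: "anchor 0 f = 0"
  using anc_add1[of 0 0 f] by simp
lemma anc_minus1: "anchor (- e) f = - anchor e f"
  by (metis add.right_inverse anc_add1 anc_zero1 eq_neg_iff_add_eq_0)
lemma anc_diff1: "anchor (e1 - e2) f = anchor e1 f - anchor e2 f"
  by (metis diff_conv_add_uminus anc_add1 anc_minus1)

lemmas asimps = anc_add1 anc_add2 anc_sm1 anc_mult anc_zero1 anc_zero2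
  anc_minus1 anc_minus2 anc_diff1 anc_diff2

lemma half: "of_real (1/2) + of_real (1/2) = (1::'r)"
  by (metis of_real_add of_real_1 field_sum_of_halves)
lemma third: "of_real (1/3) * 3 = (1::'r)"
  by (metis of_real_mult of_real_numeral of_real_1 divide_inverse_commute
      inverse_eq_divide mult_1 divide_self_if zero_neq_numeral)

definition conn :: "('e \<Rightarrow> 'e \<Rightarrow> 'e) \<Rightarrow> bool" where
  "conn N \<longleftrightarrow>
     (\<forall>e1 e1' e2. N (e1 + e1') e2 = N e1 e2 + N e1' e2) \<and>
     (\<forall>e1 e2 e2'. N e1 (e2 + e2') = N e1 e2 + N e1 e2') \<and>
     (\<forall>f e1 e2. N (smult f e1) e2 = smult f (N e1 e2)) \<and>
     (\<forall>f e1 e2. N e1 (smult f e2) = smult (anchor e1 f) e2 + smult f (N e1 e2))"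

definition metr :: "('e \<Rightarrow> 'e \<Rightarrow> 'e) \<Rightarrow> bool" where
  "metr N \<longleftrightarrow> (\<forall>e1 e2 e3. anchor e1 (pair e2 e3) = pair (N e1 e2) e3 + pair e2 (N e1 e3))"

lemma conn_metric:
  assumes "conn N" "metr N"
  shows "metric_connection smult pair anchor N"
  using assms unfolding conn_def metr_def metric_connection_def
  by (simp add: anc_of_real sm_zero_l)

lemma grassmann: "\<exists>G. conn G"
proof -
  have "fg_projective smult" using amb unfolding anchored_metric_bundle_def by simp
  then obtain n :: nat and s :: "nat \<Rightarrow> 'e" and \<phi> :: "nat \<Rightarrow> 'e \<Rightarrow> 'r" where lin: "\<forall>i<n. r_linear smult (\<phi> i)"
    and dec: "\<forall>e. e = (\<Sum>i<n. smult (\<phi> i e) (s i))"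
    unfolding fg_projective_def by blast
  define G where "G e1 e = (\<Sum>i<n. smult (anchor e1 (\<phi> i e)) (s i))" for e1 e
  have l1: "\<phi> i (x + y) = \<phi> i x + \<phi> i y" "\<phi> i (smult r x) = r * \<phi> i x" if "i < n" for i x y r
    using lin that unfolding r_linear_def by auto
  have "conn G"
    unfolding conn_def
  proof (intro conjI allI)
    fix e1 e1' e2
    show "G (e1 + e1') e2 = G e1 e2 + G e1' e2"
      unfolding G_def by (simp add: anc_add1 sm_add_l sum.distrib)
  next
    fix e1 e2 e2'
    have "G e1 (e2 + e2') = (\<Sum>i<n. smult (anchor e1 (\<phi> i e2)) (s i) + smult (anchor e1 (\<phi> i e2')) (s i))"
      unfolding G_def by (rule sum.cong) (auto simp: l1 anc_add2 sm_add_l)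
    then show "G e1 (e2 + e2') = G e1 e2 + G e1 e2'"
      unfolding G_def by (simp add: sum.distrib)
  next
    fix f e1 e2
    show "G (smult f e1) e2 = smult f (G e1 e2)"
      unfolding G_def by (simp add: anc_sm1 sm_mult sm_sum_r)
  next
    fix f e1 e2
    have "G e1 (smult f e2) = (\<Sum>i<n. smult (anchor e1 f) (smult (\<phi> i e2) (s i)) + smult f (smult (anchor e1 (\<phi> i e2)) (s i)))"
      unfolding G_def by (rule sum.cong) (auto simp: l1 anc_mult sm_add_l sm_mult[symmetric] mult.commute)
    also have "\<dots> = smult (anchor e1 f) (\<Sum>i<n. smult (\<phi> i e2) (s i)) + smult f (G e1 e2)"
      unfolding G_def by (simp add: sum.distrib sm_sum_r)
    also have "\<dots> = smult (anchor e1 f) e2 + smult f (G e1 e2)"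
      using dec by metis
    finally show "G e1 (smult f e2) = smult (anchor e1 f) e2 + smult f (G e1 e2)" .
  qed
  then show ?thesis by blast
qed

lemma metric_conn_exists: "\<exists>N. conn N \<and> metr N"
proof -
  obtain G where G: "conn G" using grassmann by blast
  have G1: "G (e1 + e1') e2 = G e1 e2 + G e1' e2"
    and G2: "G e1 (e2 + e2') = G e1 e2 + G e1 e2'"
    and G3: "G (smult f e1) e2 = smult f (G e1 e2)"
    and G4: "G e1 (smult f e2) = smult (anchor e1 f) e2 + smult f (G e1 e2)" for e1 e1' e2 e2' f
    using G unfolding conn_def by auto
  define \<psi> where "\<psi> e1 e = (\<lambda>y. anchor e1 (pair e y) - pair e (G e1 y))" for e1 e
  have lin: "r_linear smult (\<psi> e1 e)" for e1 e
    unfolding \<psi>_def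
    by (rule r_linearI) (simp_all add: psimps asimps G2 G4 algebra_simps)
  define Gs where "Gs e1 e = rep (\<psi> e1 e)" for e1 e
  have pGs: "pair (Gs e1 e) y = anchor e1 (pair e y) - pair e (G e1 y)" for e1 e y
    unfolding Gs_def using pair_rep[OF lin] \<psi>_def by simp
  define h :: 'r where "h = of_real (1/2)"
  have hh: "h + h = 1" unfolding h_def by (rule half)
  define N where "N e1 e = smult h (G e1 e + Gs e1 e)" for e1 e
  have pN: "pair (N e1 e) y = h * (pair (G e1 e) y + anchor e1 (pair e y) - pair e (G e1 y))" for e1 e y
    unfolding N_def by (simp add: psimps pGs algebra_simps)
  have "conn N"
    unfolding conn_def
  proof (intro conjI allI)
    fix e1 e1' e2
    show "N (e1 + e1') e2 = N e1 e2 + N e1' e2"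
      by (rule pair_ext) (simp add: psimps pN G1 asimps algebra_simps)
  next
    fix e1 e2 e2'
    show "N e1 (e2 + e2') = N e1 e2 + N e1 e2'"
      by (rule pair_ext) (simp add: psimps pN G2 asimps algebra_simps)
  next
    fix f e1 e2
    show "N (smult f e1) e2 = smult f (N e1 e2)"
      by (rule pair_ext) (simp add: psimps pN G3 asimps algebra_simps)
  next
    fix f e1 e2
    show "N e1 (smult f e2) = smult (anchor e1 f) e2 + smult f (N e1 e2)"
    proof (rule pair_ext)
      fix y
      have "pair (N e1 (smult f e2)) y = (h + h) * (anchor e1 f * pair e2 y) + f * pair (N e1 e2) y"
        by (simp add: psimps pN G4 asimps algebra_simps)
      then show "pair (N e1 (smult f e2)) y = pair (smult (anchor e1 f) e2 + smult f (N e1 e2)) y"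
        by (simp add: hh psimps)
    qed
  qed
  moreover have "metr N"
    unfolding metr_def
  proof (intro allI)
    fix e1 e2 e3
    have "pair (N e1 e2) e3 + pair e2 (N e1 e3) = (h + h) * anchor e1 (pair e2 e3)"
      by (simp add: pN pair_sym[of e2 "N e1 e3"] algebra_simps pair_sym[of e3 e2] pair_sym[of e3 "G e1 e2"] pair_sym[of "G e1 e3" e2])
    then show "anchor e1 (pair e2 e3) = pair (N e1 e2) e3 + pair e2 (N e1 e3)"
      by (simp add: hh)
  qed
  ultimately show ?thesis by blast
qed

lemma main:
  assumes MA: "metric_algebroid smult pair circ anchor"
  shows "\<exists>nabla. metric_connection smult pair anchor nabla \<and>
           (\<forall>e1 e2 e3. pair (circ e1 e2) e3
               = pair (nabla e1 e2) e3 - pair (nabla e2 e1) e3 + pair (nabla e3 e1) e2)"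
proof -
  have C1: "circ (e1 + e1') e2 = circ e1 e2 + circ e1' e2"
    and C2: "circ e1 (e2 + e2') = circ e1 e2 + circ e1 e2'"
    and C3: "anchor e (pair h1 h2) = pair (circ e h1) h2 + pair h1 (circ e h2)"
    and C4: "circ e e = smult (of_real (1/2)) (Dop pair anchor (pair e e))"
    for e1 e1' e2 e2' e h1 h2
    using MA unfolding metric_algebroid_def by auto
  have pD: "pair (Dop pair anchor f) y = anchor y f" for f y
  proof -
    have "r_linear smult (\<lambda>e. anchor e f)"
      by (rule r_linearI) (simp_all add: asimps)
    from pair_rep[OF this, of y] show ?thesis unfolding rep_def Dop_def by simp
  qed
  define h :: 'r where "h = of_real (1/2)"
  have hh: "h + h = 1" unfolding h_def by (rule half)
  have pC4: "pair (circ e e) y = h * anchor y (pair e e)" for e y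
    unfolding C4 h_def by (simp add: psimps pD)
  have polar: "pair (circ e1 e2) e3 + pair (circ e2 e1) e3 = anchor e3 (pair e1 e2)" for e1 e2 e3
  proof -
    have "pair (circ (e1 + e2) (e1 + e2)) e3 = pair (circ e1 e1) e3 + pair (circ e2 e2) e3
       + (pair (circ e1 e2) e3 + pair (circ e2 e1) e3)"
      by (simp add: C1 C2 psimps algebra_simps)
    moreover have "pair (circ (e1 + e2) (e1 + e2)) e3 = pair (circ e1 e1) e3 + pair (circ e2 e2) e3
       + (h + h) * anchor e3 (pair e1 e2)"
      by (simp add: pC4 psimps asimps anc_num algebra_simps pair_sym[of e2 e1])
    ultimately show ?thesis by (simp add: hh)
  qed
  obtain N where N: "conn N" "metr N" using metric_conn_exists by blast
  have N1: "N (e1 + e1') e2 = N e1 e2 + N e1' e2"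
    and N2: "N e1 (e2 + e2') = N e1 e2 + N e1 e2'"
    and N3: "N (smult f e1) e2 = smult f (N e1 e2)"
    and N4: "N e1 (smult f e2) = smult (anchor e1 f) e2 + smult f (N e1 e2)"
    and N5: "anchor e1 (pair e2 e3) = pair (N e1 e2) e3 + pair e2 (N e1 e3)"
    for e1 e1' e2 e2' e3 f
    using N unfolding conn_def metr_def by auto
  define D where "D e1 e2 e3 = pair (circ e1 e2) e3 - pair (N e1 e2) e3 + pair (N e2 e1) e3 - pair (N e3 e1) e2"
    for e1 e2 e3
  have skew23: "D e1 e2 e3 = - D e1 e3 e2" for e1 e2 e3
  proof -
    have "pair (circ e1 e2) e3 + pair (circ e1 e3) e2 = pair (N e1 e2) e3 + pair (N e1 e3) e2"
      using C3[of e1 e2 e3] N5[of e1 e2 e3] by (simp add: pair_sym[of e2])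
    then show ?thesis unfolding D_def by (simp add: algebra_simps)
  qed
  have skew12: "D e1 e2 e3 = - D e2 e1 e3" for e1 e2 e3
  proof -
    have "pair (circ e1 e2) e3 + pair (circ e2 e1) e3 = pair (N e3 e1) e2 + pair (N e3 e2) e1"
      using polar[of e1 e2 e3] N5[of e3 e1 e2] by (simp add: pair_sym[of e1 "N e3 e2"])
    then show ?thesis unfolding D_def by (simp add: algebra_simps)
  qed
  have D3a: "D e1 e2 (x + y) = D e1 e2 x + D e1 e2 y" for e1 e2 x y
    unfolding D_def by (simp add: psimps N1 algebra_simps)
  have D3s: "D e1 e2 (smult r x) = r * D e1 e2 x" for e1 e2 x r
    unfolding D_def by (simp add: psimps N3 algebra_simps)
  have D2a: "D e1 (x + y) e3 = D e1 x e3 + D e1 y e3" for e1 e3 x y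
    using skew23[of e1 "x+y" e3] skew23[of e1 x e3] skew23[of e1 y e3] D3a[of e1 e3 x y] by simp
  have D2s: "D e1 (smult r x) e3 = r * D e1 x e3" for e1 e3 x r
    using skew23[of e1 "smult r x" e3] skew23[of e1 x e3] D3s[of e1 e3 r x] by simp
  have D1a: "D (x + y) e2 e3 = D x e2 e3 + D y e2 e3" for e2 e3 x y
    using skew12[of "x+y" e2 e3] skew12[of x e2 e3] skew12[of y e2 e3] D2a[of e2 x y e3] by simp
  have D1s: "D (smult r x) e2 e3 = r * D x e2 e3" for e2 e3 x r
    using skew12[of "smult r x" e2 e3] skew12[of x e2 e3] D2s[of e2 r x e3] by simp
  have cyc: "D e3 e1 e2 = D e1 e2 e3" for e1 e2 e3
    using skew12[of e3 e1 e2] skew23[of e1 e2 e3] by simp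
  define t :: 'r where "t = of_real (1/3)"
  have t3: "t * 3 = 1" unfolding t_def by (rule third)
  have linA: "r_linear smult (\<lambda>y. t * D e1 e2 y)" for e1 e2
    by (rule r_linearI) (simp_all add: D3a D3s algebra_simps)
  define A where "A e1 e2 = rep (\<lambda>y. t * D e1 e2 y)" for e1 e2
  have pA: "pair (A e1 e2) y = t * D e1 e2 y" for e1 e2 y
    unfolding A_def using pair_rep[OF linA] by simp
  define Nb where "Nb e1 e2 = N e1 e2 + A e1 e2" for e1 e2
  have pNb: "pair (Nb e1 e2) y = pair (N e1 e2) y + t * D e1 e2 y" for e1 e2 y
    unfolding Nb_def by (simp add: psimps pA)
  have "conn Nb"
    unfolding conn_def
  proof (intro conjI allI)
    fix e1 e1' e2
    show "Nb (e1 + e1') e2 = Nb e1 e2 + Nb e1' e2"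
      by (rule pair_ext) (simp add: psimps pNb N1 D1a algebra_simps)
  next
    fix e1 e2 e2'
    show "Nb e1 (e2 + e2') = Nb e1 e2 + Nb e1 e2'"
      by (rule pair_ext) (simp add: psimps pNb N2 D2a algebra_simps)
  next
    fix f e1 e2
    show "Nb (smult f e1) e2 = smult f (Nb e1 e2)"
      by (rule pair_ext) (simp add: psimps pNb N3 D1s algebra_simps)
  next
    fix f e1 e2
    show "Nb e1 (smult f e2) = smult (anchor e1 f) e2 + smult f (Nb e1 e2)"
      by (rule pair_ext) (simp add: psimps pNb N4 D2s algebra_simps)
  qed
  moreover have "metr Nb"
    unfolding metr_def
  proof (intro allI)
    fix e1 e2 e3
    show "anchor e1 (pair e2 e3) = pair (Nb e1 e2) e3 + pair e2 (Nb e1 e3)"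
      using N5[of e1 e2 e3] skew23[of e1 e2 e3]
      by (simp add: pNb pair_sym[of e2 "Nb e1 e3"] pair_sym[of e2 "N e1 e3"] algebra_simps)
  qed
  moreover have "pair (circ e1 e2) e3
               = pair (Nb e1 e2) e3 - pair (Nb e2 e1) e3 + pair (Nb e3 e1) e2" for e1 e2 e3
  proof -
    have "pair (Nb e1 e2) e3 - pair (Nb e2 e1) e3 + pair (Nb e3 e1) e2
       = pair (N e1 e2) e3 - pair (N e2 e1) e3 + pair (N e3 e1) e2 + (t * 3) * D e1 e2 e3"
    proof -
      have r1: "D e2 e1 e3 = - D e1 e2 e3" using skew12[of e2 e1 e3] by simp
      have r2: "D e3 e1 e2 = D e1 e2 e3" by (rule cyc)
      show ?thesis by (simp only: pNb r1 r2) (simp add: algebra_simps)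
    qed
    then show ?thesis by (simp add: t3 D_def)
  qed
  ultimately show ?thesis using conn_metric by blast
qed

end

theorem proposition3p2:
  fixes smult :: "'r::{comm_ring_1,real_algebra_1} \<Rightarrow> 'e::ab_group_add \<Rightarrow> 'e"
    and pair :: "'e \<Rightarrow> 'e \<Rightarrow> 'r"
    and circ :: "'e \<Rightarrow> 'e \<Rightarrow> 'e"
    and anchor :: "'e \<Rightarrow> 'r \<Rightarrow> 'r"
  assumes "metric_algebroid smult pair circ anchor"
  shows "\<exists>nabla. metric_connection smult pair anchor nabla \<and>
           (\<forall>e1 e2 e3. pair (circ e1 e2) e3
               = pair (nabla e1 e2) e3 - pair (nabla e2 e1) e3 + pair (nabla e3 e1) e2)"
proof -
  interpret amb smult pair anchor
    using assms unfolding metric_algebroid_def amb_def by simp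
  show ?thesis using main[OF assms] .
qed

end
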